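(* Let $\mathbb F$ be a field and $\gamma$ a permutation of $\mathbb F$ fixing both $0$ and $1$. Suppose that $\gamma$ normalizes both the groups $\Gamma(\mathbb F^\times)$ and $s\Gamma(\mathbb F^\times)s$, where $s$ is the permutation $x\mapsto -x+1$. Then $\gamma\in\mathrm{Aut}(\mathbb F)$.
   Context: $\Gamma(\mathbb F^\times)$ denotes the group of permutations of $\mathbb F$ of the form $x\mapsto ax$ with $a\in\mathbb F^\times$. $\mathrm{Aut}(\mathbb F)$ is the group of field automorphisms. *)

theory Defs
  imports Main
begin

definition Gamma_mult :: "('a::field \<Rightarrow> 'a) set" where
  "Gamma_mult = {(\<lambda>x. a * x) | a. a \<noteq> 0}"

definition s_perm :: "'a::field \<Rightarrow> 'a" where
  "s_perm x = - x + 1"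

definition s_Gamma_s :: "('a::field \<Rightarrow> 'a) set" where
  "s_Gamma_s = (\<lambda>g. s_perm \<circ> g \<circ> s_perm) ` Gamma_mult"

definition normalizes :: "('a \<Rightarrow> 'a) \<Rightarrow> ('a \<Rightarrow> 'a) set \<Rightarrow> bool" where
  "normalizes \<gamma> G \<longleftrightarrow> (\<lambda>g. \<gamma> \<circ> g \<circ> inv \<gamma>) ` G = G"

definition field_aut :: "('a::field \<Rightarrow> 'a) \<Rightarrow> bool" where
  "field_aut \<sigma> \<longleftrightarrow> bij \<sigma> \<and> (\<forall>x y. \<sigma> (x + y) = \<sigma> x + \<sigma> y) \<and> (\<forall>x y. \<sigma> (x * y) = \<sigma> x * \<sigma> y)"

end

theory Submission
  imports Defs
begin

theorem corollary2p2:
  fixes \<gamma> :: "'a::field \<Rightarrow> 'a"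
  assumes "bij \<gamma>" and "\<gamma> 0 = 0" and "\<gamma> 1 = 1"
    and "normalizes \<gamma> Gamma_mult" and "normalizes \<gamma> s_Gamma_s"
  shows "field_aut \<gamma>"
proof -
  have inj: "inj \<gamma>" using assms(1) bij_is_inj by blast
  have ig: "inv \<gamma> (\<gamma> x) = x" for x using inj by simp
  have ig0: "inv \<gamma> 0 = 0" using ig[of 0] assms(2) by simp
  have ig1: "inv \<gamma> 1 = 1" using ig[of 1] assms(3) by simp
  have M: "\<gamma> (a * x) = \<gamma> a * \<gamma> x" for a x
  proof (cases "a = 0")
    case True then show ?thesis using assms(2) by simp
  next
    case False
    have "(\<lambda>x. a * x) \<in> Gamma_mult" using False unfolding Gamma_mult_def by blast
    hence "\<gamma> \<circ> (\<lambda>x. a * x) \<circ> inv \<gamma> \<in> Gamma_mult"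
      using assms(4) unfolding normalizes_def by blast
    then obtain b where b: "\<gamma> \<circ> (\<lambda>x. a * x) \<circ> inv \<gamma> = (\<lambda>x. b * x)"
      unfolding Gamma_mult_def by blast
    have e: "\<gamma> (a * inv \<gamma> y) = b * y" for y using fun_cong[OF b, of y] by simp
    have "b = \<gamma> a" using e[of 1] ig1 by simp
    then show ?thesis using e[of "\<gamma> x"] ig by simp
  qed
  have M2: "1 - \<gamma> (1 - a * u) = (1 - \<gamma> (1 - a)) * (1 - \<gamma> (1 - u))" for a u
  proof (cases "a = 0")
    case True then show ?thesis using assms(3) by simp
  next
    case False
    have "(\<lambda>g. s_perm \<circ> g \<circ> s_perm) (\<lambda>x. a * x) \<in> s_Gamma_s"
      using False unfolding Gamma_mult_def s_Gamma_s_def by blast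
    hence "\<gamma> \<circ> ((\<lambda>g. s_perm \<circ> g \<circ> s_perm) (\<lambda>x. a * x)) \<circ> inv \<gamma> \<in> s_Gamma_s"
      using assms(5) unfolding normalizes_def by blast
    then obtain b where b: "\<gamma> \<circ> ((\<lambda>g. s_perm \<circ> g \<circ> s_perm) (\<lambda>x. a * x)) \<circ> inv \<gamma>
         = (\<lambda>g. s_perm \<circ> g \<circ> s_perm) (\<lambda>x. b * x)"
      unfolding Gamma_mult_def s_Gamma_s_def by blast
    have e: "\<gamma> (- (a * (- inv \<gamma> y + 1)) + 1) = - (b * (- y + 1)) + 1" for y
      using fun_cong[OF b, of y] by (simp add: s_perm_def)
    have e0: "\<gamma> (1 - a) = 1 - b" using e[of 0] ig0 by (simp add: algebra_simps)
    have e1: "\<gamma> (1 - a * u) = 1 - b * (1 - \<gamma> (1 - u))"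
      using e[of "\<gamma> (1 - u)"] ig by (simp add: algebra_simps)
    show ?thesis using e0 e1 by simp
  qed
  have gm1: "\<gamma> (-1) = -1"
  proof -
    have "\<gamma> (-1) * \<gamma> (-1) = 1" using M[of "-1" "-1"] assms(3) by simp
    hence "(\<gamma> (-1) - 1) * (\<gamma> (-1) + 1) = 0" by (simp add: algebra_simps)
    moreover have "\<gamma> (-1) = 1 \<Longrightarrow> -1 = (1::'a)" using inj assms(3) by (metis injD)
    ultimately show ?thesis
    proof -
      assume h: "(\<gamma> (-1) - 1) * (\<gamma> (-1) + 1) = 0" and h2: "\<gamma> (-1) = 1 \<Longrightarrow> -1 = (1::'a)"
      show ?thesis
      proof (cases "\<gamma> (-1) = 1")
        case True then show ?thesis using h2 by simp
      next
        case False
        hence "\<gamma> (-1) - 1 \<noteq> 0" by simp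
        hence "\<gamma> (-1) + 1 = 0" using h by simp
        thus ?thesis by (metis add_eq_0_iff minus_equation_iff)
      qed
    qed
  qed
  have neg: "\<gamma> (- x) = - \<gamma> x" for x using M[of "-1" x] gm1 by simp
  have nz: "\<gamma> x \<noteq> 0" if "x \<noteq> 0" for x using inj assms(2) that by (metis injD)
  have C: "\<gamma> x + \<gamma> (1 - x) = 1" for x
  proof (cases "x = 0 \<or> x = 1")
    case True then show ?thesis using assms(2,3) by auto
  next
    case False
    define A where "A = \<gamma> x"
    define B where "B = \<gamma> (1 - x)"
    have A0: "A \<noteq> 0" using nz False A_def by auto
    have B0: "B \<noteq> 0" using nz False B_def by auto
    have "1 - \<gamma> (1 - x * inverse x) = (1 - \<gamma> (1 - x)) * (1 - \<gamma> (1 - inverse x))"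
      using M2 by blast
    hence h1: "1 = (1 - B) * (1 - \<gamma> (1 - inverse x))" using False assms(2) B_def by simp
    have "1 - inverse x = (x - 1) * inverse x" using False by (simp add: field_simps)
    hence "\<gamma> (1 - inverse x) = \<gamma> (x - 1) * \<gamma> (inverse x)" using M by simp
    also have "\<gamma> (x - 1) = - B" using neg[of "1 - x"] B_def by simp
    also have "\<gamma> (inverse x) = inverse A"
    proof -
      have "\<gamma> x * \<gamma> (inverse x) = 1" using M[of x "inverse x"] False assms(3) by simp
      thus ?thesis using A_def A0 by (simp add: field_simps)
    qed
    finally have "1 = (1 - B) * (1 + B / A)" using h1 by (simp add: field_simps)
    hence "A = (1 - B) * (A + B)" using A0 by (simp add: field_simps)
    hence "B * (1 - A - B) = 0" by (simp add: algebra_simps)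
    hence "1 - A - B = 0" using B0 by simp
    hence "A + B = 1" by (simp add: algebra_simps)
    thus ?thesis using A_def B_def by simp
  qed
  have P1: "\<gamma> (1 + z) = 1 + \<gamma> z" for z
    using C[of "- z"] neg[of z] by (simp add: algebra_simps)
  have Add: "\<gamma> (x + y) = \<gamma> x + \<gamma> y" for x y
  proof (cases "y = 0")
    case True then show ?thesis using assms(2) by simp
  next
    case False
    have "x + y = y * (1 + x / y)" using False by (simp add: field_simps)
    hence h: "\<gamma> (x + y) = \<gamma> y * (1 + \<gamma> (x / y))" using M P1 by simp
    have "\<gamma> y * \<gamma> (x / y) = \<gamma> x" using M[of y "x / y"] False by simp
    then show ?thesis using h by (simp add: algebra_simps)
  qed
  show ?thesis unfolding field_aut_def using assms(1) Add M by blast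
qed

end
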